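(* For every $\eta,\varepsilon\in(0,1/3]$ (and $d\in\mathbb{N}$) there is $N=N(\eta,\varepsilon)\in\mathbb{N}$ such that for infinitely many $m\in\mathbb{N}$ the following holds: there exists a set $B\subset\{-m,\dots,m-1\}^d$ with $|B|\le\eta m^d$ such that $$\bigl|(A+B)\cap[m]^d\bigr|\ge(1-\varepsilon)m^d\quad\text{for all }A\subset[m]^d\text{ with }|A|\ge N,$$ where sums are taken in $\mathbb{Z}^d$.
   Context: $[m]=\{0,1,\dots,m-1\}$; $|\cdot|$ denotes cardinality. *)

theory Defs
  imports "HOL-Analysis.Analysis"
begin

text \<open>Points of Z^d are vectors int^'d, with d = CARD('d) (so d >= 1).\<close>

definition grid :: "nat \<Rightarrow> (int ^ 'd) set" where
  "grid m = {x. \<forall>i. 0 \<le> x $ i \<and> x $ i < int m}"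

definition sym_grid :: "nat \<Rightarrow> (int ^ 'd) set" where
  "sym_grid m = {x. \<forall>i. - int m \<le> x $ i \<and> x $ i < int m}"

definition sumset :: "(int ^ 'd) set \<Rightarrow> (int ^ 'd) set \<Rightarrow> (int ^ 'd) set" where
  "sumset A B = {a + b | a b. a \<in> A \<and> b \<in> B}"

end

theory Submission
  imports Defs "HOL-Real_Asymp.Real_Asymp"
begin
lemma card_box:
  fixes I :: "int set" assumes "finite I"
  shows "card {x :: int ^ 'd. \<forall>i. x $ i \<in> I} = card I ^ CARD('d)"
    and "finite {x :: int ^ 'd. \<forall>i. x $ i \<in> I}"
proof -
  have b: "bij_betw vec_lambda (PiE UNIV (\<lambda>_. I)) {x :: int ^ 'd. \<forall>i. x $ i \<in> I}"
  proof (rule bij_betwI[where g = vec_nth])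
    show "vec_lambda \<in> (UNIV \<rightarrow>\<^sub>E I) \<rightarrow> {x :: int ^ 'd. \<forall>i. x $ i \<in> I}" by auto
    show "vec_nth \<in> {x :: int ^ 'd. \<forall>i. x $ i \<in> I} \<rightarrow> (UNIV \<rightarrow>\<^sub>E I)" by auto
    show "vec_nth (vec_lambda f) = f" if "f \<in> UNIV \<rightarrow>\<^sub>E I" for f :: "'d \<Rightarrow> int" by (simp add: vec_lambda_inverse)
    show "vec_lambda (vec_nth y) = y" for y :: "int ^ 'd" by simp
  qed
  show "finite {x :: int ^ 'd. \<forall>i. x $ i \<in> I}"
    using bij_betw_finite[OF b] assms by (simp add: finite_PiE)
  have "card {x :: int ^ 'd. \<forall>i. x $ i \<in> I} = card (PiE (UNIV :: 'd set) (\<lambda>_. I))"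
    using bij_betw_same_card[OF b] by simp
  also have "\<dots> = card I ^ CARD('d)" by (simp add: card_PiE)
  finally show "card {x :: int ^ 'd. \<forall>i. x $ i \<in> I} = card I ^ CARD('d)" .
qed

lemma card_grid: "card (grid m :: (int ^ 'd) set) = m ^ CARD('d)"
proof -
  have "grid m = {x :: int ^ 'd. \<forall>i. x $ i \<in> {0..<int m}}" by (auto simp: grid_def)
  then show ?thesis using card_box(1)[where 'd='d, of "{0..<int m}"] by simp
qed

lemma card_sym_grid: "card (sym_grid m :: (int ^ 'd) set) = (2 * m) ^ CARD('d)"
proof -
  have "sym_grid m = {x :: int ^ 'd. \<forall>i. x $ i \<in> {- int m..<int m}}" by (auto simp: sym_grid_def)
  then show ?thesis using card_box(1)[where 'd='d, of "{- int m..<int m}"] by (simp add: nat_mult_distrib)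
qed

lemma finite_grid: "finite (grid m :: (int ^ 'd) set)"
proof -
  have "grid m = {x :: int ^ 'd. \<forall>i. x $ i \<in> {0..<int m}}" by (auto simp: grid_def)
  then show ?thesis using card_box(2)[where 'd='d, of "{0..<int m}"] by simp
qed
lemma finite_sym_grid: "finite (sym_grid m :: (int ^ 'd) set)"
proof -
  have "sym_grid m = {x :: int ^ 'd. \<forall>i. x $ i \<in> {- int m..<int m}}" by (auto simp: sym_grid_def)
  then show ?thesis using card_box(2)[where 'd='d, of "{- int m..<int m}"] by simp
qed


lemma binom_step: "(n choose Suc k) * Suc k = (n choose k) * (n - k)"
proof (cases n)
  case 0 then show ?thesis by simp
next
  case (Suc n')
  have "Suc k * (Suc n' choose Suc k) = Suc n' * (n' choose k)" by (rule Suc_times_binomial)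
  moreover have "(Suc n' - k) * (Suc n' choose k) = Suc n' * ((Suc n' - 1) choose k)"
    by (rule binomial_absorb_comp)
  ultimately show ?thesis using Suc by (simp add: mult.commute)
qed

lemma binom_ratio_nat:
  assumes "r \<le> M"
  shows "((M - r) choose s) * M ^ s \<le> (M choose s) * (M - r) ^ s"
proof (induction s)
  case 0 then show ?case by simp
next
  case (Suc s)
  have key: "(M - r - s) * M \<le> (M - s) * (M - r)"
  proof (cases "s \<le> M - r")
    case True
    then have "int ((M - r - s) * M) = (int M - int r - int s) * int M" using assms by (simp add: of_nat_diff)
    moreover have "int ((M - s) * (M - r)) = (int M - int s) * (int M - int r)" using assms True by (simp add: of_nat_diff)
    moreover have "(int M - int r - int s) * int M \<le> (int M - int s) * (int M - int r)"
      by (simp add: algebra_simps)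
    ultimately show ?thesis by linarith
  next
    case False then show ?thesis by simp
  qed
  have "((M - r) choose Suc s) * M ^ Suc s * Suc s = (((M - r) choose Suc s) * Suc s) * (M ^ s * M)"
    by (simp only: power_Suc ac_simps)
  also have "\<dots> = (((M - r) choose s) * (M - r - s)) * (M ^ s * M)"
    by (simp only: binom_step)
  also have "\<dots> = (((M - r) choose s) * M ^ s) * ((M - r - s) * M)"
    by (simp only: ac_simps)
  also have "\<dots> \<le> ((M choose s) * (M - r) ^ s) * ((M - s) * (M - r))"
    by (rule mult_mono[OF Suc.IH key]) auto
  also have "\<dots> = ((M choose s) * (M - s)) * ((M - r) ^ s * (M - r))"
    by (simp only: ac_simps)
  also have "\<dots> = ((M choose Suc s) * Suc s) * ((M - r) ^ s * (M - r))"
    by (simp only: binom_step)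
  also have "\<dots> = (M choose Suc s) * (M - r) ^ Suc s * Suc s"
    by (simp only: power_Suc ac_simps)
  finally have h: "((M - r) choose Suc s) * M ^ Suc s * Suc s \<le> (M choose Suc s) * (M - r) ^ Suc s * Suc s" .
  show ?case by (rule mult_right_le_imp_le[OF h]) simp
qed

lemma greedy:
  fixes R :: "'a \<Rightarrow> 'a \<Rightarrow> bool"
  assumes "finite U" "\<And>x y. R x y \<Longrightarrow> R y x" "\<And>x. R x x"
    "\<And>x. x \<in> U \<Longrightarrow> card {y\<in>U. R x y} \<le> K"
  shows "\<exists>U0\<subseteq>U. card U \<le> K * card U0 \<and> (\<forall>x\<in>U0. \<forall>y\<in>U0. x \<noteq> y \<longrightarrow> \<not> R x y)"
  using assms(1,4)
proof (induction "card U" arbitrary: U rule: less_induct)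
  case less
  show ?case
  proof (cases "U = {}")
    case True then show ?thesis by auto
  next
    case False
    then obtain x where x: "x \<in> U" by auto
    define U' where "U' = U - {y\<in>U. R x y}"
    have fin: "finite {y\<in>U. R x y}" using less.prems by auto
    have sub: "{y\<in>U. R x y} \<subseteq> U" by auto
    have cU: "card U = card U' + card {y\<in>U. R x y}"
      unfolding U'_def using card_Diff_subset[OF fin sub] card_mono[OF less.prems(1) sub] by simp
    have "x \<in> {y\<in>U. R x y}" using x assms(3) by auto
    then have "card {y\<in>U. R x y} > 0" using fin by (auto simp: card_gt_0_iff)
    then have lt: "card U' < card U" using cU by simp
    have finU': "finite U'" using less.prems(1) unfolding U'_def by simp
    have bnd: "card {y \<in> U'. R z y} \<le> K" if z: "z \<in> U'" for z
    proof -
      have "{y \<in> U'. R z y} \<subseteq> {y \<in> U. R z y}" unfolding U'_def by auto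
      then have "card {y \<in> U'. R z y} \<le> card {y \<in> U. R z y}"
        by (rule card_mono[rotated]) (use less.prems(1) in auto)
      also have "\<dots> \<le> K" using less.prems(2) z unfolding U'_def by auto
      finally show "card {y \<in> U'. R z y} \<le> K" .
    qed
    have "\<exists>U0\<subseteq>U'. card U' \<le> K * card U0 \<and> (\<forall>x\<in>U0. \<forall>y\<in>U0. x \<noteq> y \<longrightarrow> \<not> R x y)"
      by (rule less.hyps[OF lt finU' bnd])
    then obtain U0 where U0: "U0 \<subseteq> U'" "card U' \<le> K * card U0" "\<forall>x\<in>U0. \<forall>y\<in>U0. x \<noteq> y \<longrightarrow> \<not> R x y"
      by blast
    have xU0: "x \<notin> U0" using U0(1) x assms(3) unfolding U'_def by auto
    have finU0: "finite U0" using U0(1) less.prems(1) unfolding U'_def by (meson finite_Diff finite_subset)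
    have noR: "\<forall>y\<in>U0. \<not> R x y" using U0(1) unfolding U'_def by auto
    show ?thesis
    proof (intro exI[of _ "insert x U0"] conjI)
      show "insert x U0 \<subseteq> U" using U0(1) x unfolding U'_def by auto
      show "card U \<le> K * card (insert x U0)"
        using cU U0(2) less.prems(2)[OF x] xU0 finU0 by simp
      show "\<forall>a\<in>insert x U0. \<forall>b\<in>insert x U0. a \<noteq> b \<longrightarrow> \<not> R a b"
        using U0(3) noR assms(2) by blast
    qed
  qed
qed


lemma exists_good_B:
  fixes m N t s n :: nat and \<epsilon> :: real
  assumes n: "n = m ^ CARD('d)" and Npos: "N > 0"
    and tN: "real t * real N ^ 2 \<le> \<epsilon> * real n"
    and ineq: "real (n choose N) * real (n choose t) * real ((2 ^ CARD('d) * n - t * N) choose s)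
               < real ((2 ^ CARD('d) * n) choose s)"
  shows "\<exists>B :: (int ^ 'd) set. B \<subseteq> sym_grid m \<and> card B = s \<and>
           (\<forall>A. A \<subseteq> grid m \<and> card A \<ge> N \<longrightarrow>
              real (card (sumset A B \<inter> grid m)) \<ge> (1 - \<epsilon>) * real n)"
proof (rule ccontr)
  assume contra: "\<not> ?thesis"
  define G :: "(int ^ 'd) set" where "G = grid m"
  define Ss :: "(int ^ 'd) set" where "Ss = sym_grid m"
  define M where "M = 2 ^ CARD('d) * n"
  have finG: "finite G" unfolding G_def by (rule finite_grid)
  have finSs: "finite Ss" unfolding Ss_def by (rule finite_sym_grid)
  have cG: "card G = n" unfolding G_def n by (rule card_grid)
  have cSs: "card Ss = M" unfolding Ss_def M_def n by (simp add: card_sym_grid power_mult_distrib)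
  define Dm :: "(int ^ 'd) set \<Rightarrow> (int ^ 'd) set \<Rightarrow> (int ^ 'd) set"
    where "Dm U1 A = (\<lambda>(x,a). x - a) ` (U1 \<times> A)" for U1 A
  define P where "P = {(A, U1). A \<subseteq> G \<and> card A = N \<and> U1 \<subseteq> G \<and> card U1 = t \<and>
                      inj_on (\<lambda>(x,a). x - a) (U1 \<times> A)}"
  define F where "F p = {B. B \<subseteq> Ss - Dm (snd p) (fst p) \<and> card B = s}" for p
  have DmSs: "Dm U1 A \<subseteq> Ss" if "U1 \<subseteq> G" "A \<subseteq> G" for U1 A
  proof
    fix z assume "z \<in> Dm U1 A"
    then obtain x a where xa: "x \<in> U1" "a \<in> A" "z = x - a" unfolding Dm_def by auto
    then have "x \<in> G" "a \<in> G" using that by auto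
    then show "z \<in> Ss" using xa(3) unfolding G_def Ss_def grid_def sym_grid_def
      by (auto simp: less_imp_le) (smt (verit))+
  qed
  have cardF: "card (F p) = (M - t * N) choose s" if "p \<in> P" for p
  proof -
    obtain A U1 where p: "p = (A, U1)" by (cases p)
    have h: "A \<subseteq> G" "card A = N" "U1 \<subseteq> G" "card U1 = t" "inj_on (\<lambda>(x,a). x - a) (U1 \<times> A)"
      using that unfolding P_def p by auto
    have "card (Dm U1 A) = card (U1 \<times> A)" unfolding Dm_def by (rule card_image[OF h(5)])
    also have "\<dots> = t * N" using h by (simp add: card_cartesian_product)
    finally have cD: "card (Dm U1 A) = t * N" .
    have "card (Ss - Dm U1 A) = M - t * N"
      using card_Diff_subset[OF finite_subset[OF DmSs[OF h(3,1)] finSs] DmSs[OF h(3,1)]] cD cSs by simp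
    then show ?thesis unfolding F_def p using n_subsets[of "Ss - Dm U1 A" s] finSs by simp
  qed
  have finP: "finite P"
  proof -
    have "P \<subseteq> Pow G \<times> Pow G" unfolding P_def by auto
    then show ?thesis using finG by (meson finite_Pow_iff finite_SigmaI finite_subset)
  qed
  have cardP: "card P \<le> (n choose N) * (n choose t)"
  proof -
    have "P \<subseteq> {A. A \<subseteq> G \<and> card A = N} \<times> {U. U \<subseteq> G \<and> card U = t}" unfolding P_def by auto
    then have "card P \<le> card ({A. A \<subseteq> G \<and> card A = N} \<times> {U. U \<subseteq> G \<and> card U = t})"
      by (rule card_mono[rotated]) (use finG in auto)
    also have "\<dots> = (n choose N) * (n choose t)"
      using finG cG by (simp add: card_cartesian_product n_subsets)
    finally show ?thesis .
  qed
  have cover: "{B. B \<subseteq> Ss \<and> card B = s} \<subseteq> (\<Union>p\<in>P. F p)"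
  proof
    fix B assume "B \<in> {B. B \<subseteq> Ss \<and> card B = s}"
    then have B: "B \<subseteq> Ss" "card B = s" by auto
    from contra B obtain A where A: "A \<subseteq> G" "card A \<ge> N"
      "real (card (sumset A B \<inter> G)) < (1 - \<epsilon>) * real n"
      unfolding G_def Ss_def by (auto simp: not_le)
    obtain A' where A': "A' \<subseteq> A" "card A' = N" "finite A'"
      using obtain_subset_with_card_n[OF A(2)] by blast
    have A'G: "A' \<subseteq> G" using A' A by auto
    define U where "U = G - sumset A' B"
    have finU: "finite U" unfolding U_def using finG by simp
    have "sumset A' B \<inter> G \<subseteq> sumset A B \<inter> G" unfolding sumset_def using A'(1) by blast
    then have le1: "card (sumset A' B \<inter> G) \<le> card (sumset A B \<inter> G)"
      by (rule card_mono[rotated]) (use finG in auto)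
    have le2: "card (sumset A' B \<inter> G) \<le> n" using cG card_mono[OF finG, of "sumset A' B \<inter> G"] by auto
    have "card U = card G - card (G \<inter> sumset A' B)"
      unfolding U_def by (rule card_Diff_subset_Int) (use finG in auto)
    then have cU: "card U = n - card (sumset A' B \<inter> G)" using cG by (simp add: Int_commute)
    have "real (card U) > \<epsilon> * real n"
      using cU le1 le2 A(3) by (simp add: of_nat_diff algebra_simps)
    then have "real (t * N ^ 2) < real (card U)" using tN by simp
    then have tU: "t * N ^ 2 < card U" by (simp only: of_nat_less_iff)
    define R where "R x y = (\<exists>a\<in>A'. \<exists>a'\<in>A'. x - a = y - a')" for x y :: "int ^ 'd"
    have Rsym: "R x y \<Longrightarrow> R y x" for x y unfolding R_def by metis
    have Rrefl: "R x x" for x unfolding R_def using A'(2) Npos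
      by (metis card.empty equals0I less_numeral_extra(3))
    have Rb: "card {y\<in>U. R x y} \<le> N ^ 2" for x
    proof -
      have "{y\<in>U. R x y} \<subseteq> (\<lambda>(a,a'). x - a + a') ` (A' \<times> A')"
      proof
        fix y assume "y \<in> {y\<in>U. R x y}"
        then obtain a a' where "a \<in> A'" "a' \<in> A'" "x - a = y - a'" unfolding R_def by auto
        then show "y \<in> (\<lambda>(a,a'). x - a + a') ` (A' \<times> A')"
          by (intro image_eqI[of _ _ "(a,a')"]) (auto simp: algebra_simps)
      qed
      then have "card {y\<in>U. R x y} \<le> card ((\<lambda>(a,a'). x - a + a') ` (A' \<times> A'))"
        by (rule card_mono[rotated]) (use A'(3) in auto)
      also have "\<dots> \<le> card (A' \<times> A')" by (rule card_image_le) (use A'(3) in auto)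
      also have "\<dots> = N ^ 2" using A'(2) by (simp add: card_cartesian_product power2_eq_square)
      finally show ?thesis .
    qed
    obtain U0 where U0: "U0 \<subseteq> U" "card U \<le> N ^ 2 * card U0"
      "\<forall>x\<in>U0. \<forall>y\<in>U0. x \<noteq> y \<longrightarrow> \<not> R x y"
      using greedy[of U R "N ^ 2", OF finU Rsym Rrefl Rb] by blast
    have "t * N ^ 2 < card U0 * N ^ 2" using tU U0(2) by (metis mult.commute order_less_le_trans)
    then have "t \<le> card U0" by (meson less_imp_le mult_less_cancel2)
    then obtain U1 where U1: "U1 \<subseteq> U0" "card U1 = t" "finite U1"
      using obtain_subset_with_card_n by blast
    have U1G: "U1 \<subseteq> G" using U1(1) U0(1) unfolding U_def by auto
    have inj: "inj_on (\<lambda>(x,a). x - a) (U1 \<times> A')"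
    proof (rule inj_onI)
      fix p q assume p: "p \<in> U1 \<times> A'" and q: "q \<in> U1 \<times> A'"
        and e: "(\<lambda>(x,a). x - a) p = (\<lambda>(x,a). x - a) q"
      obtain x a where pp: "p = (x, a)" by (cases p)
      obtain y a' where qq: "q = (y, a')" by (cases q)
      have e': "x - a = y - a'" using e pp qq by simp
      show "p = q"
      proof (cases "x = y")
        case True then show ?thesis using e' pp qq by simp
      next
        case False
        have "R x y" unfolding R_def using p q pp qq e' by auto
        then show ?thesis using False U0(3) U1(1) p q pp qq by auto
      qed
    qed
    have PA: "(A', U1) \<in> P" unfolding P_def using A'G A'(2) U1G U1(2) inj by auto
    have "B \<subseteq> Ss - Dm U1 A'"
    proof
      fix b assume b: "b \<in> B"
      have "b \<notin> Dm U1 A'"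
      proof
        assume "b \<in> Dm U1 A'"
        then obtain x a where xa: "x \<in> U1" "a \<in> A'" "b = x - a" unfolding Dm_def by auto
        then have "x = a + b" by simp
        then have "x \<in> sumset A' B" unfolding sumset_def using b xa(2) by blast
        moreover have "x \<in> U" using xa(1) U1(1) U0(1) by auto
        ultimately show False unfolding U_def by auto
      qed
      then show "b \<in> Ss - Dm U1 A'" using b B(1) by auto
    qed
    then have "B \<in> F (A', U1)" unfolding F_def using B(2) by simp
    then show "B \<in> (\<Union>p\<in>P. F p)" using PA by blast
  qed
  have "M choose s = card {B. B \<subseteq> Ss \<and> card B = s}" using n_subsets[OF finSs] cSs by simp
  also have "\<dots> \<le> card (\<Union>p\<in>P. F p)"
  proof (rule card_mono[OF _ cover])
    have "(\<Union>p\<in>P. F p) \<subseteq> Pow Ss" unfolding F_def by auto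
    then show "finite (\<Union>p\<in>P. F p)" using finSs by (meson finite_Pow_iff finite_subset)
  qed
  also have "\<dots> \<le> (\<Sum>p\<in>P. card (F p))" by (rule card_UN_le[OF finP])
  also have "\<dots> = card P * ((M - t * N) choose s)" using cardF by simp
  also have "\<dots> \<le> (n choose N) * (n choose t) * ((M - t * N) choose s)"
    using cardP by simp
  finally have "real (M choose s) \<le> real ((n choose N) * (n choose t) * ((M - t * N) choose s))"
    by (simp only: of_nat_le_iff)
  then show False using ineq unfolding M_def by simp
qed


lemma pow_fact_le_exp: fixes x::real assumes "0 \<le> x" shows "x ^ k / fact k \<le> exp x"
proof -
  have s: "(\<lambda>n. x^n / fact n) sums exp x"
    using exp_converges[of x] by (simp add: scaleR_conv_of_real divide_inverse mult.commute)
  have "sum (\<lambda>n. x^n / fact n) {k} \<le> suminf (\<lambda>n. x^n / fact n)"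
    by (rule sum_le_suminf) (use s assms in \<open>auto simp: sums_iff\<close>)
  then show ?thesis using s by (simp add: sums_iff)
qed

lemma choose_le_entropy:
  assumes "t > 0" "n = t * q"
  shows "real (n choose t) \<le> (exp 1 * real q) ^ t"
proof -
  have f: "real (n choose t) * fact t \<le> real n ^ t"
    using binomial_fact_pow[of n t] by (metis of_nat_fact of_nat_le_iff of_nat_mult of_nat_power)
  have e: "real t ^ t / fact t \<le> exp (real t)" by (rule pow_fact_le_exp) simp
  have tpos: "real t ^ t > 0" using assms by simp
  have "real (n choose t) \<le> real n ^ t / fact t" using f by (simp add: field_simps)
  also have "\<dots> = (real t * real q) ^ t / fact t" using assms by simp
  also have "\<dots> = real q ^ t * (real t ^ t / fact t)" by (simp add: power_mult_distrib)
  also have "\<dots> \<le> real q ^ t * exp (real t)" by (rule mult_left_mono[OF e]) simp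
  also have "\<dots> = (exp 1 * real q) ^ t" by (simp add: power_mult_distrib exp_of_nat_mult[symmetric] mult.commute)
  finally show ?thesis .
qed

lemma numeric:
  fixes n N t s c c2 D0 :: nat
  assumes npos: "n > 0" and Npos: "N > 0" and cpos: "c > 0" and c2pos: "c2 > 0" and D0pos: "D0 > 0"
    and tdef: "t * (c * N ^ 2) = n" and sdef: "s * c2 = n"
    and g: "ln (exp 1 * real c * real N ^ 2) < real N / (real c2 * real D0)"
    and big: "real N * ln (real n) < real n * ((real N / (real c2 * real D0) - ln (exp 1 * real c * real N ^ 2)) / (real c * real N ^ 2))"
  shows "real (n choose N) * real (n choose t) * real ((D0 * n - t * N) choose s) < real ((D0 * n) choose s)"
proof -
  define M where "M = D0 * n"
  define r where "r = t * N"
  define gg where "gg = real N / (real c2 * real D0) - ln (exp 1 * real c * real N ^ 2)"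
  have tpos: "t > 0" using tdef npos by (cases t) auto
  have "r \<le> t * (c * N ^ 2)" unfolding r_def using cpos Npos
    by (intro mult_le_mono2) (simp add: power2_eq_square)
  then have rn: "r \<le> n" using tdef by simp
  have nM: "n \<le> M" unfolding M_def using D0pos by simp
  have sn: "s \<le> n" using sdef c2pos by (metis le_add1 mult.commute mult_le_mono2 nat_mult_1_right Suc_le_eq One_nat_def less_imp_le_nat dvd_imp_le dvd_triv_right)
  have Mpos: "M > 0" using npos nM by simp
  have CMpos: "real (M choose s) > 0" using sn nM by simp
  have rat: "real ((M - r) choose s) * real M ^ s \<le> real (M choose s) * real (M - r) ^ s"
    using binom_ratio_nat[of r M s] rn nM by (metis of_nat_le_iff of_nat_mult of_nat_power le_trans)
  have q: "real (M - r) / real M \<le> exp (- (real r / real M))"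
  proof -
    have "real (M - r) / real M = 1 + (- (real r / real M))" using rn nM Mpos by (simp add: of_nat_diff field_simps)
    also have "\<dots> \<le> exp (- (real r / real M))" by (rule exp_ge_add_one_self)
    finally show ?thesis .
  qed
  have C3: "real ((M - r) choose s) \<le> real (M choose s) * exp (- (real r * real s / real M))"
  proof -
    have "real ((M - r) choose s) \<le> real (M choose s) * (real (M - r) / real M) ^ s"
      using rat Mpos by (simp add: power_divide field_simps)
    also have "\<dots> \<le> real (M choose s) * exp (- (real r / real M)) ^ s"
      by (intro mult_left_mono power_mono q) auto
    also have "\<dots> = real (M choose s) * exp (- (real r * real s / real M))"
      by (simp add: exp_of_nat_mult[symmetric] field_simps)
    finally show ?thesis .
  qed
  have C1: "real (n choose N) \<le> real n ^ N"
  proof -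
    have "real (n choose N) * 1 \<le> real (n choose N) * fact N" by (intro mult_left_mono) auto
    also have "\<dots> \<le> real n ^ N"
      using binomial_fact_pow[of n N] by (metis of_nat_fact of_nat_le_iff of_nat_mult of_nat_power)
    finally show ?thesis by simp
  qed
  have C2: "real (n choose t) \<le> (exp 1 * real (c * N ^ 2)) ^ t"
    by (rule choose_le_entropy[OF tpos tdef[symmetric]])
  define Q where "Q = real n ^ N * (exp 1 * real (c * N ^ 2)) ^ t * exp (- (real r * real s / real M))"
  have "real (n choose N) * real (n choose t) * real ((M - r) choose s)
        \<le> real n ^ N * (exp 1 * real (c * N ^ 2)) ^ t * (real (M choose s) * exp (- (real r * real s / real M)))"
    by (intro mult_mono C1 C2 C3) auto
  also have "\<dots> = Q * real (M choose s)" unfolding Q_def by simp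
  finally have LQ: "real (n choose N) * real (n choose t) * real ((M - r) choose s) \<le> Q * real (M choose s)" .
  have lnQ: "ln Q = real N * ln (real n) + real t * ln (exp 1 * real (c * N ^ 2)) - real r * real s / real M"
    unfolding Q_def using npos cpos Npos by (simp add: ln_mult ln_realpow)
  have rsM: "real r * real s / real M = real t * (real N / (real c2 * real D0))"
  proof -
    have "real s * real c2 = real n" using sdef by (metis of_nat_mult)
    then show ?thesis unfolding r_def M_def using npos c2pos D0pos by (simp add: field_simps)
  qed
  have tn: "real t = real n / (real c * real N ^ 2)"
  proof -
    have "real t * (real c * real N ^ 2) = real n" using tdef by (metis of_nat_mult of_nat_power)
    then show ?thesis using cpos Npos by (simp add: field_simps)
  qed
  have "ln Q = real N * ln (real n) - real t * gg"
    unfolding lnQ rsM gg_def by (simp add: algebra_simps)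
  also have "real t * gg = real n * (gg / (real c * real N ^ 2))" unfolding tn by simp
  finally have "ln Q < 0" using big unfolding gg_def by simp
  moreover have "Q > 0" unfolding Q_def using npos cpos Npos by simp
  ultimately have "Q < 1" by (metis ln_less_zero_iff)
  then have "Q * real (M choose s) < real (M choose s)" using CMpos by simp
  with LQ show ?thesis unfolding M_def r_def by simp
qed


lemma ev1: fixes c K :: real assumes "c > 0" "K > 0"
  shows "eventually (\<lambda>x. ln (exp 1 * c * x^2) < x / K) at_top"
  using assms by real_asymp
lemma ev2: fixes c K :: real assumes "c > 0"
  shows "eventually (\<lambda>x. K * ln x < x * c) at_top"
  using assms by real_asymp

theorem corollary4p5:
  fixes \<eta> \<epsilon> :: real
  assumes "0 < \<eta>" "\<eta> \<le> 1/3" "0 < \<epsilon>" "\<epsilon> \<le> 1/3"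
  shows "\<exists>N::nat. infinite {m::nat. \<exists>B :: (int ^ 'd) set. B \<subseteq> sym_grid m \<and>
           real (card B) \<le> \<eta> * real m ^ CARD('d) \<and>
           (\<forall>A. A \<subseteq> grid m \<and> card A \<ge> N \<longrightarrow>
              real (card (sumset A B \<inter> grid m)) \<ge> (1 - \<epsilon>) * real m ^ CARD('d))}"
proof -
  define d where "d = CARD('d)"
  have dpos: "d > 0" unfolding d_def by simp
  define D0 :: nat where "D0 = 2 ^ d"
  have D0pos: "D0 > 0" unfolding D0_def by simp
  define c :: nat where "c = nat \<lceil>1 / \<epsilon>\<rceil>"
  define c2 :: nat where "c2 = nat \<lceil>1 / \<eta>\<rceil>"
  have c_ge: "real c \<ge> 1 / \<epsilon>" unfolding c_def by linarith
  have c2_ge: "real c2 \<ge> 1 / \<eta>" unfolding c2_def by linarith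
  have cpos: "c > 0" using c_ge assms by (metis of_nat_0 not_gr0 divide_pos_pos zero_less_one not_le)
  have c2pos: "c2 > 0" using c2_ge assms by (metis of_nat_0 not_gr0 divide_pos_pos zero_less_one not_le)
  have ceps: "1 / real c \<le> \<epsilon>" using c_ge assms cpos by (simp add: field_simps)
  have c2eta: "1 / real c2 \<le> \<eta>" using c2_ge assms c2pos by (simp add: field_simps)
  obtain X0 where X0: "\<And>x. x \<ge> X0 \<Longrightarrow> ln (exp 1 * real c * x^2) < x / (real c2 * real D0)"
    using ev1[of "real c" "real c2 * real D0"] cpos c2pos D0pos
    unfolding eventually_at_top_linorder by auto
  define N :: nat where "N = nat \<lceil>max X0 1\<rceil>"
  have NX0: "real N \<ge> X0" and Npos: "N > 0" unfolding N_def by linarith+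
  have gN: "ln (exp 1 * real c * real N ^ 2) < real N / (real c2 * real D0)" using X0[OF NX0] .
  define gg where "gg = real N / (real c2 * real D0) - ln (exp 1 * real c * real N ^ 2)"
  have ggpos: "gg > 0" using gN unfolding gg_def by simp
  define \<delta> where "\<delta> = gg / (real c * real N ^ 2)"
  have \<delta>pos: "\<delta> > 0" unfolding \<delta>_def using ggpos cpos Npos by simp
  obtain Y0 where Y0: "\<And>x. x \<ge> Y0 \<Longrightarrow> real N * ln x < x * \<delta>"
    using ev2[of \<delta> "real N"] \<delta>pos unfolding eventually_at_top_linorder by auto
  define L where "L = c * N ^ 2 * c2"
  have Lpos: "L > 0" unfolding L_def using cpos c2pos Npos by simp
  define j0 :: nat where "j0 = nat \<lceil>Y0\<rceil> + 1"
  define S where "S = {m::nat. \<exists>B :: (int ^ 'd) set. B \<subseteq> sym_grid m \<and>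
           real (card B) \<le> \<eta> * real m ^ CARD('d) \<and>
           (\<forall>A. A \<subseteq> grid m \<and> card A \<ge> N \<longrightarrow>
              real (card (sumset A B \<inter> grid m)) \<ge> (1 - \<epsilon>) * real m ^ CARD('d))}"
  have mem: "L * j \<in> S" if j: "j \<ge> j0" for j
  proof -
    define m where "m = L * j"
    define n where "n = m ^ d"
    have jpos: "j > 0" using j unfolding j0_def by simp
    have mpos: "m > 0" unfolding m_def using Lpos jpos by simp
    have mn: "m \<le> n" unfolding n_def using mpos dpos
      by (metis One_nat_def Suc_leI power_increasing power_one_right)
    have npos: "n > 0" using mn mpos by simp
    have mj: "j \<le> m" unfolding m_def using Lpos by simp
    have nY: "real n \<ge> Y0"
    proof -
      have "Y0 \<le> real j0" unfolding j0_def by linarith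
      also have "\<dots> \<le> real n" using j mj mn by simp
      finally show ?thesis .
    qed
    have "m dvd n" unfolding n_def using dpos by (simp add: dvd_power)
    then have Ldvd: "L dvd n" unfolding m_def by (metis dvd_mult_left)
    have "c * N ^ 2 dvd n" using Ldvd unfolding L_def by (metis dvd_mult_left)
    then obtain t where tdef: "t * (c * N ^ 2) = n" by (metis dvd_def mult.commute)
    have "c2 dvd n" using Ldvd unfolding L_def by (metis dvd_mult_left dvd_mult_right)
    then obtain s where sdef: "s * c2 = n" by (metis dvd_def mult.commute)
    have big: "real N * ln (real n) < real n * ((real N / (real c2 * real D0) - ln (exp 1 * real c * real N ^ 2)) / (real c * real N ^ 2))"
      using Y0[OF nY] unfolding \<delta>_def gg_def .
    have ineq: "real (n choose N) * real (n choose t) * real ((D0 * n - t * N) choose s) < real ((D0 * n) choose s)"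
      by (rule numeric[OF npos Npos cpos c2pos D0pos tdef sdef gN big])
    have tN: "real t * real N ^ 2 \<le> \<epsilon> * real n"
    proof -
      have "real t * (real c * real N ^ 2) = real n" using tdef by (metis of_nat_mult of_nat_power)
      then have "real t * real N ^ 2 = real n * (1 / real c)" using cpos by (simp add: field_simps)
      also have "\<dots> \<le> real n * \<epsilon>" by (rule mult_left_mono[OF ceps]) simp
      finally show ?thesis by (simp add: mult.commute)
    qed
    obtain B :: "(int ^ 'd) set" where B: "B \<subseteq> sym_grid m" "card B = s"
      "\<forall>A. A \<subseteq> grid m \<and> card A \<ge> N \<longrightarrow> real (card (sumset A B \<inter> grid m)) \<ge> (1 - \<epsilon>) * real n"
      using exists_good_B[of n m N t \<epsilon> s, where 'd='d] n_def d_def Npos tN ineq D0_def by auto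
    have sle: "real s \<le> \<eta> * real n"
    proof -
      have "real s * real c2 = real n" using sdef by (metis of_nat_mult)
      then have "real s = real n * (1 / real c2)" using c2pos by (simp add: field_simps)
      also have "\<dots> \<le> real n * \<eta>" by (rule mult_left_mono[OF c2eta]) simp
      finally show ?thesis by (simp add: mult.commute)
    qed
    have rn: "real m ^ CARD('d) = real n" unfolding n_def d_def by simp
    show ?thesis unfolding S_def m_def[symmetric] using B sle rn by auto
  qed
  have "infinite S"
    unfolding infinite_nat_iff_unbounded_le
  proof
    fix k
    have "L * (k + j0) \<ge> k" using Lpos by (metis le_add1 le_trans mult_le_mono1 One_nat_def Suc_leI mult_1)
    then show "\<exists>m\<ge>k. m \<in> S" using mem[of "k + j0"] by auto
  qed
  then show ?thesis unfolding S_def by blast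
qed
end
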